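(* Let $E(\delta):=\big((\lfloor\delta^{-1}\rfloor+1)\delta-1\big)\log\lfloor\delta^{-1}\rfloor+\big(1-\lfloor\delta^{-1}\rfloor\delta\big)\log\big(\lfloor\delta^{-1}\rfloor+1\big)$ for $\delta\in(0,1]$ (base-2 logarithms). Then $$\max_{\delta\in(0,1]}\ \frac{E(\delta)+(1-\delta)}{2}=\frac{\log 80}{10},$$ attained at $\delta=1/5$. Consequently, with $I(m,t)$ the maximum number of $t$-element maximal independent sets in an $m$-vertex graph, $\sum_{t=1}^m\sqrt{I(m,t)}\,2^{(m-t)/2}=O^*(80^{m/10})=O(1.5500^m)$.
   Context: Logarithms are base 2. $I(m,t)=\lfloor m/t\rfloor^{(\lfloor m/t\rfloor+1)t-m}(\lfloor m/t\rfloor+1)^{m-\lfloor m/t\rfloor t}$. $O^*(f(m))$ means $O(m^c f(m))$ for some constant $c$. *)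

theory Defs
  imports "HOL-Analysis.Analysis" "HOL-Library.Landau_Symbols"
begin

definition E :: "real \<Rightarrow> real" where
  "E \<delta> = ((real_of_int \<lfloor>1/\<delta>\<rfloor> + 1) * \<delta> - 1) * log 2 (real_of_int \<lfloor>1/\<delta>\<rfloor>)
          + (1 - real_of_int \<lfloor>1/\<delta>\<rfloor> * \<delta>) * log 2 (real_of_int \<lfloor>1/\<delta>\<rfloor> + 1)"

definition F :: "real \<Rightarrow> real" where
  "F \<delta> = (E \<delta> + (1 - \<delta>)) / 2"

text \<open>I(m,t) = q^((q+1)t - m) (q+1)^(m - q t) with q = floor(m/t),
  the maximum number of t-element maximal independent sets of an m-vertex graph.\<close>
definition I :: "nat \<Rightarrow> nat \<Rightarrow> nat" where
  "I m t = (m div t) ^ ((m div t + 1) * t - m) * (m div t + 1) ^ (m - (m div t) * t)"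

end

theory Submission imports Defs begin

lemma aux1: "(j::nat) \<ge> 6 \<Longrightarrow> 2*(j+1)^5 \<le> 5*j^5"
proof -
  assume j: "j \<ge> 6"
  have "6*(j+1) \<le> 7*j" using j by simp
  hence "(6*(j+1))^5 \<le> (7*j)^5" by (rule power_mono) simp
  hence "6^5*(j+1)^5 \<le> 7^5*j^5" by (simp only: power_mult_distrib)
  hence "7776*(j+1)^5 \<le> 16807*j^5" by simp
  hence "7776*(2*(j+1)^5) \<le> 7776*(5*j^5)" by linarith
  thus ?thesis by simp
qed

lemma base5: "j^5 * 2^j \<le> 32 * 5^(j::nat)"
proof (cases "j \<ge> 6")
  case True then show ?thesis
  proof (induction j rule: dec_induct)
    case base then show ?case by simp
  next
    case (step n)
    have "(n+1)^5 * 2^(n+1) = (2*(n+1)^5) * 2^n" by simp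
    also have "\<dots> \<le> (5*n^5) * 2^n" using aux1[OF step(1)] by simp
    also have "\<dots> = 5 * (n^5*2^n)" by simp
    also have "\<dots> \<le> 5 * (32*5^n)" using step(3) by (metis mult_le_mono2)
    finally show ?case by simp
  qed
next
  case False
  hence "j < 6" by simp
  hence "j=0 \<or> j=1 \<or> j=2 \<or> j=3 \<or> j=4 \<or> j=5" by auto
  then show ?thesis by auto
qed

lemma lemA: "j^5 * 2^(5*j) \<le> 32 * 80^(j::nat)"
proof -
  have "j^5 * 2^j * 16^j \<le> 32 * 5^j * 16^j" using base5 by simp
  moreover have "(2::nat)^(5*j) = 2^j * 16^j"
  proof -
    have "(2::nat)^(5*j) = (2^5)^j" by (simp only: power_mult)
    also have "\<dots> = (2*16)^j" by simp
    finally show ?thesis by (simp only: power_mult_distrib)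
  qed
  moreover have "(80::nat)^j = 5^j * 16^j" by (simp flip: power_mult_distrib)
  ultimately show ?thesis by (simp add: mult.assoc)
qed

lemma lemA': "1 \<le> j \<Longrightarrow> j^5 * 2^(5*(j-1)) \<le> 80^(j::nat)"
proof -
  assume "1 \<le> j"
  then have "(2::nat)^(5*j) = 32 * 2^(5*(j-1))"
  proof -
    obtain k where "j = Suc k" using \<open>1 \<le> j\<close> by (cases j) auto
    then show ?thesis by (simp add: power_add)
  qed
  with lemA[of j] show ?thesis by simp
qed

lemma key: "((p+1)^ a*(p+2)^r)^5 * 2^(5*(p* a+(p+1)*r)) \<le> (80::nat)^((p+1)* a+(p+2)*r)"
proof -
  have e1: "((p+1)^ a*(p+2)^r)^5 = ((p+1)^5)^ a * ((p+2)^5)^r"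
    by (simp add: power_mult_distrib flip: power_mult) (simp add: mult.commute)
  have e2: "(2::nat)^(5*(p * a+(p+1)*r)) = (2^(5*p))^ a * (2^(5*(p+1)))^r"
  proof -
    have "5*(p * a+(p+1)*r) = (5*p)*a + (5*(p+1))*r" by (simp add: algebra_simps)
    then show ?thesis by (simp only: power_add power_mult)
  qed
  have eq: "((p+1)^ a*(p+2)^r)^5 * 2^(5*(p * a+(p+1)*r)) = ((p+1)^5*2^(5*p))^ a * ((p+2)^5*2^(5*(p+1)))^r"
    unfolding e1 e2 by (simp add: power_mult_distrib mult_ac)
  have "((p+1)^5*2^(5*p))^ a \<le> (80^(p+1))^ a"
    using lemA'[of "p+1"] by (intro power_mono) auto
  moreover have "((p+2)^5*2^(5*(p+1)))^r \<le> (80^(p+2))^r"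
    using lemA'[of "p+2"] by (intro power_mono) auto
  ultimately have "((p+1)^5*2^(5*p))^ a * ((p+2)^5*2^(5*(p+1)))^r \<le> (80^(p+1))^ a * (80^(p+2))^r"
    by (rule mult_mono) auto
  also have "\<dots> = 80^((p+1)* a+(p+2)*r)" by (simp only: power_add power_mult)
  finally show ?thesis using eq by simp
qed

lemma Gb: assumes "1 \<le> j" shows "log 2 (real j) + real j - 1 \<le> real j * log 2 80 / 5"
proof -
  have "real (j^5 * 2^(5*(j-1))) \<le> real (80^j)" using lemA'[OF assms] by (rule of_nat_mono)
  hence h: "real j ^5 * 2^(5*(j-1)) \<le> 80^j" by simp
  have pos: "0 < real j ^5 * 2^(5*(j-1))" using assms by simp
  have "log 2 (real j ^5 * 2^(5*(j-1))) \<le> log 2 (80^j)"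
    using h pos by simp
  moreover have "log 2 (real j ^5 * 2^(5*(j-1))) = 5 * log 2 (real j) + 5 * (real j - 1)"
    using assms by (simp add: log_mult log_nat_power of_nat_diff)
  moreover have "log 2 ((80::real)^j) = real j * log 2 80" by (simp add: log_nat_power)
  ultimately show ?thesis by simp
qed

lemma log80: "log 2 80 = log 2 5 + 4"
proof -
  have a: "log 2 (5*16::real) = log 2 5 + log 2 16" by (rule log_mult_pos) auto
  have "log 2 (16::real) = 4" using log_pow_cancel[of "2::real" 4] by simp
  with a show ?thesis by simp
qed

lemma Fbound: assumes d: "\<delta> \<in> {0<..1}" shows "F \<delta> \<le> log 2 80 / 10"
proof -
  have d0: "0 < \<delta>" and d1: "\<delta> \<le> 1" using d by auto
  define k where "k = \<lfloor>1/\<delta>\<rfloor>"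
  have fc: "real_of_int k \<le> 1/\<delta>" "1/\<delta> < real_of_int k + 1" unfolding k_def by linarith+
  have "1 \<le> 1/\<delta>" using d0 d1 by simp
  hence k1: "1 \<le> k" unfolding k_def by (simp add: le_floor_iff)
  define n where "n = nat k"
  have kn: "k = int n" and n1: "1 \<le> n" using k1 unfolding n_def by auto
  have kd: "real n * \<delta> \<le> 1" using fc(1) d0 kn by (simp add: field_simps)
  have kd2: "1 < (real n + 1) * \<delta>" using fc(2) d0 kn by (simp add: field_simps)
  define u where "u = (real n + 1) * \<delta> - 1"
  define v where "v = 1 - real n * \<delta>"
  have u0: "0 \<le> u" and v0: "0 \<le> v" using kd kd2 unfolding u_def v_def by auto
  define L where "L = log 2 80"
  have g1: "log 2 (real n) + real n - 1 \<le> real n * L / 5" using Gb[OF n1] unfolding L_def .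
  have g2: "log 2 (real n + 1) + (real n + 1) - 1 \<le> (real n + 1) * L / 5" using Gb[of "n+1", OF le_add2] unfolding L_def of_nat_add of_nat_1 .
  have h1: "u * (log 2 (real n) + real n - 1) \<le> u * (real n * L / 5)" using g1 u0 by (rule mult_left_mono)
  have h2: "v * (log 2 (real n + 1) + (real n + 1) - 1) \<le> v * ((real n + 1) * L / 5)" using g2 v0 by (rule mult_left_mono)
  have h3: "u * (real n * L / 5) + v * ((real n + 1) * L / 5) = L / 5"
  proof -
    have "u * real n + v * (real n + 1) = 1" unfolding u_def v_def by (simp add: algebra_simps)
    hence "(u * real n + v * (real n + 1)) * L / 5 = L / 5" by simp
    moreover have "u * (real n * L / 5) + v * ((real n + 1) * L / 5) = (u * real n + v * (real n + 1)) * L / 5"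
      by (simp add: field_simps)
    ultimately show ?thesis by simp
  qed
  have h4: "2 * F \<delta> = u * (log 2 (real n) + real n - 1) + v * (log 2 (real n + 1) + (real n + 1) - 1)"
  proof -
    have hE: "E \<delta> = u * log 2 (real n) + v * log 2 (real n + 1)"
      unfolding E_def k_def[symmetric] kn u_def v_def by simp
    have hd: "1 - \<delta> = u*(real n - 1) + v * real n" unfolding u_def v_def by (simp add: algebra_simps)
    have "2 * F \<delta> = E \<delta> + (1 - \<delta>)" by (simp add: F_def)
    also have "\<dots> = u * log 2 (real n) + v * log 2 (real n + 1) + (u*(real n - 1) + v * real n)"
      using hE hd by simp
    also have "\<dots> = u * (log 2 (real n) + real n - 1) + v * (log 2 (real n + 1) + (real n + 1) - 1)"
      by (simp add: algebra_simps)
    finally show ?thesis .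
  qed
  show ?thesis using h1 h2 h3 h4 unfolding L_def by linarith
qed

lemma natbound: assumes "1 \<le> t" "t \<le> m" shows "(I m t * 2^(m-t))^5 \<le> 80^m"
proof -
  define q where "q = m div t"
  define r where "r = m mod t"
  have mq: "m = q*t + r" unfolding q_def r_def by simp
  have rt: "r < t" unfolding r_def using assms by simp
  have q1: "1 \<le> q" unfolding q_def using assms by (simp add: div_greater_zero_iff Suc_le_eq)
  define p where "p = q - 1"
  have qp: "q = p + 1" using q1 unfolding p_def by simp
  define a where "a = t - r"
  have ta: "t = a + r" using rt unfolding a_def by simp
  have m2: "m = (p+1)*a + (p+2)*r" using mq qp ta by (simp add: algebra_simps)
  have e1: "(q+1)*t - m = a" using mq qp ta by (simp add: algebra_simps)
  have e2: "m - q*t = r" using mq by simp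
  have e3: "m - t = p*a + (p+1)*r" using mq qp ta by (simp add: algebra_simps)
  have Ie: "I m t = (p+1)^a * (p+2)^r" unfolding I_def q_def[symmetric] using e1 e2 qp by simp
  have p2: "((2::nat)^k)^5 = 2^(5*k)" for k by (metis power_mult mult.commute)
  have "(I m t * 2^(m-t))^5 = ((p+1)^a*(p+2)^r)^5 * (2^(p*a+(p+1)*r))^5"
    by (simp only: Ie e3 power_mult_distrib)
  also have "\<dots> = ((p+1)^a*(p+2)^r)^5 * 2^(5*(p*a+(p+1)*r))" by (simp only: p2)
  also have "\<dots> \<le> 80^((p+1)*a+(p+2)*r)" by (rule key)
  finally show ?thesis using m2 by simp
qed

lemma termbound: assumes "1 \<le> t" "t \<le> m"
  shows "sqrt (real (I m t)) * 2 powr ((real m - real t) / 2) \<le> 80 powr (real m / 10)"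
proof -
  define N where "N = I m t * 2^(m-t)"
  have "real m - real t = real (m - t)" using assms by simp
  hence "2 powr ((real m - real t) / 2) = sqrt (2 ^ (m-t))"
  proof -
    assume rr: "real m - real t = real (m - t)"
    have "2 powr ((real m - real t) / 2) = sqrt (2 powr (real m - real t))" by (rule powr_half_sqrt_powr) simp
    also have "(2::real) powr (real m - real t) = 2 ^ (m-t)" unfolding rr by (rule powr_realpow) simp
    finally show ?thesis .
  qed
  hence eq: "sqrt (real (I m t)) * 2 powr ((real m - real t) / 2) = sqrt (real N)"
    unfolding N_def by (simp add: real_sqrt_mult)
  have nb: "real N ^ 5 \<le> 80 ^ m" using natbound[OF assms] unfolding N_def[symmetric]
  proof -
    have "real (N^5) \<le> real (80^m)" using natbound[OF assms] unfolding N_def[symmetric] by (rule of_nat_mono)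
    thus ?thesis by simp
  qed
  have "sqrt (real N) ^ 10 = real N ^ 5"
  proof -
    have "sqrt (real N) ^ 10 = (sqrt (real N) ^ 2) ^ 5" by (subst power_mult[symmetric]) simp
    thus ?thesis by simp
  qed
  also have "\<dots> \<le> 80 ^ m" by (rule nb)
  also have "(80::real) ^ m = (80 powr (real m / 10)) ^ 10"
  proof -
    have "(80 powr (real m / 10)) ^ 10 = 80 powr (real m / 10 * 10)"
      by (simp add: powr_realpow[symmetric] powr_powr)
    thus ?thesis by (simp add: powr_realpow)
  qed
  finally have "sqrt (real N) ^ 10 \<le> (80 powr (real m / 10)) ^ 10" .
  hence "sqrt (real N) \<le> 80 powr (real m / 10)"
    using power_mono_iff[of "sqrt (real N)" "80 powr (real m/10)" 10] by simp
  thus ?thesis using eq by simp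
qed

lemma sumbound: "(\<Sum>t=1..m. sqrt (real (I m t)) * 2 powr ((real m - real t) / 2)) \<le> real m * 80 powr (real m / 10)"
proof -
  have "(\<Sum>t=1..m. sqrt (real (I m t)) * 2 powr ((real m - real t) / 2)) \<le> of_nat (card {1..m}) * 80 powr (real m / 10)"
    by (rule sum_bounded_above) (use termbound in auto)
  thus ?thesis by simp
qed

lemma expbound: "\<exists>C. \<forall>m::nat. real m * 80 powr (real m / 10) \<le> C * 1.55 powr real m"
proof -
  define b :: real where "b = 80 powr (1/10)"
  have b0: "0 < b" unfolding b_def by simp
  have pb: "80 powr (real m / 10) = b ^ m" for m :: nat
  proof -
    have "80 powr (real m / 10) = b powr real m" unfolding b_def by (simp add: powr_powr)
    thus ?thesis using b0 by (simp add: powr_realpow)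
  qed
  have "b ^ 10 = 80" using pb[of 10] by simp
  moreover have "(80::real) < 1.55 ^ 10" by (simp add: power_divide)
  ultimately have "b ^ 10 < 1.55 ^ 10" by simp
  hence bl: "b < 1.55" by (rule power_less_imp_less_base) simp
  define e where "e = 1.55 / b - 1"
  have e0: "0 < e" unfolding e_def using b0 bl by (simp add: field_simps)
  have "real m * 80 powr (real m / 10) \<le> (1/e) * 1.55 powr real m" for m :: nat
  proof -
    have "1 + real m * e \<le> (1 + e) ^ m" by (rule Bernoulli_inequality) (use e0 in simp)
    hence "real m * e \<le> (1.55 / b) ^ m" unfolding e_def by simp
    hence "real m * e * b ^ m \<le> (1.55 / b) ^ m * b ^ m" using b0 by (simp add: mult_right_mono)
    also have "\<dots> = 1.55 ^ m" using b0 by (simp add: power_divide)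
    finally have "real m * b ^ m * e \<le> 1.55 ^ m" by (simp add: mult_ac)
    hence "real m * b ^ m \<le> 1.55 ^ m / e" using e0 by (simp add: pos_le_divide_eq)
    thus ?thesis using pb[of m] by (simp add: powr_realpow)
  qed
  thus ?thesis by blast
qed

theorem mainTheorem8:
  shows "(\<forall>\<delta>\<in>{0<..1}. F \<delta> \<le> log 2 80 / 10)
    \<and> F (1/5) = log 2 80 / 10
    \<and> (\<exists>c::nat. (\<lambda>m::nat. \<Sum>t=1..m. sqrt (real (I m t)) * 2 powr ((real m - real t) / 2))
           \<in> O(\<lambda>m. real m ^ c * 80 powr (real m / 10)))
    \<and> (\<lambda>m::nat. \<Sum>t=1..m. sqrt (real (I m t)) * 2 powr ((real m - real t) / 2))
           \<in> O(\<lambda>m. 1.55 powr real m)"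
proof (intro conjI)
  show "\<forall>\<delta>\<in>{0<..1}. F \<delta> \<le> log 2 80 / 10" using Fbound by blast
  show "F (1/5) = log 2 80 / 10"
    unfolding F_def E_def log80 by simp
  have nn: "0 \<le> (\<Sum>t=1..m. sqrt (real (I m t)) * 2 powr ((real m - real t) / 2))" for m
    by (rule sum_nonneg) simp
  show "\<exists>c::nat. (\<lambda>m::nat. \<Sum>t=1..m. sqrt (real (I m t)) * 2 powr ((real m - real t) / 2))
           \<in> O(\<lambda>m. real m ^ c * 80 powr (real m / 10))"
  proof (intro exI[of _ 1] bigoI[where c=1] always_eventually allI)
    fix m :: nat
    show "norm (\<Sum>t=1..m. sqrt (real (I m t)) * 2 powr ((real m - real t) / 2)) \<le> 1 * norm (real m ^ 1 * 80 powr (real m / 10))"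
      using sumbound[of m] nn[of m] by simp
  qed
  obtain C where C: "\<forall>m::nat. real m * 80 powr (real m / 10) \<le> C * 1.55 powr real m" using expbound by blast
  show "(\<lambda>m::nat. \<Sum>t=1..m. sqrt (real (I m t)) * 2 powr ((real m - real t) / 2))
           \<in> O(\<lambda>m. 1.55 powr real m)"
  proof (intro bigoI[where c=C] always_eventually allI)
    fix m :: nat
    show "norm (\<Sum>t=1..m. sqrt (real (I m t)) * 2 powr ((real m - real t) / 2)) \<le> C * norm (1.55 powr real m :: real)"
      using sumbound[of m] nn[of m] C by (simp add: order_trans)
  qed
qed

end
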